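(* Let $U\subseteq V$, let $H=(U,E(U))$ be the induced subgraph with inherited edge weights, and let $f\in\ell^2(V,w)$ be nonnegative with $f(v)=0$ for all $v\notin U$ and $\sum_{v\in U}w_H(v)f(v)^2>0$. Suppose that for every $t>0$, $$w\big(E(V_f(t),V\setminus U)\big)\le w\big(E(V_f(t),U\setminus V_f(t))\big).$$ Then $\sqrt{8\,\mathcal R_H(f)}\ge\mathcal R_G(f)$.
   Context: $G=(V,E,w)$ finite undirected, positive edge weights, $w(v)=\sum_{u\sim v}w(u,v)\ge1$. $E(U)$ is the set of edges with both endpoints in $U$; $w_H(v)=\sum_{u\in U,\{u,v\}\in E}w(u,v)$ for $v\in U$. For disjoint $S,T$, $w(E(S,T))$ is the total weight of edges with one endpoint in $S$ and the other in $T$. $V_f(t)=\{v:f(v)\ge t\}$. $\mathcal R_G(f)=\sum_{\{u,v\}\in E}w(u,v)(f(u)-f(v))^2/\sum_{v\in V}w(v)f(v)^2$ and $\mathcal R_H(f)=\sum_{\{u,v\}\in E(U)}w(u,v)(f(u)-f(v))^2/\sum_{v\in U}w_H(v)f(v)^2$. *)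

theory Defs
  imports "HOL-Analysis.Analysis"
begin

definition wgraph :: "'a set \<Rightarrow> ('a \<Rightarrow> 'a \<Rightarrow> real) \<Rightarrow> bool" where
  "wgraph V w \<longleftrightarrow> finite V \<and> (\<forall>u v. w u v = w v u) \<and> (\<forall>u v. w u v \<ge> 0)
     \<and> (\<forall>u. w u u = 0) \<and> (\<forall>u v. w u v \<noteq> 0 \<longrightarrow> u \<in> V \<and> v \<in> V)"

definition edges_in :: "('a \<Rightarrow> 'a \<Rightarrow> real) \<Rightarrow> 'a set \<Rightarrow> 'a set set" where
  "edges_in w U = {{u, v} | u v. u \<in> U \<and> v \<in> U \<and> u \<noteq> v \<and> w u v > 0}"

definition edge_weight :: "('a \<Rightarrow> 'a \<Rightarrow> real) \<Rightarrow> 'a set \<Rightarrow> real" where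
  "edge_weight w e = (THE c. \<exists>u v. e = {u, v} \<and> c = w u v)"

text \<open>Weighted degree w(v) in G, and degree w_H(v) in the induced subgraph on U.\<close>
definition wdeg :: "'a set \<Rightarrow> ('a \<Rightarrow> 'a \<Rightarrow> real) \<Rightarrow> 'a \<Rightarrow> real" where
  "wdeg V w v = (\<Sum>u\<in>V. w u v)"

definition cut_weight :: "('a \<Rightarrow> 'a \<Rightarrow> real) \<Rightarrow> 'a set \<Rightarrow> 'a set \<Rightarrow> real" where
  "cut_weight w S T = (\<Sum>u\<in>S. \<Sum>v\<in>T. w u v)"

definition superlevel :: "'a set \<Rightarrow> ('a \<Rightarrow> real) \<Rightarrow> real \<Rightarrow> 'a set" where
  "superlevel V f t = {v \<in> V. f v \<ge> t}"

text \<open>Rayleigh quotient of f on the subgraph induced by U (U = V gives R_G).\<close>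
definition rayleigh :: "'a set \<Rightarrow> ('a \<Rightarrow> 'a \<Rightarrow> real) \<Rightarrow> ('a \<Rightarrow> real) \<Rightarrow> real" where
  "rayleigh U w f =
     (\<Sum>e\<in>edges_in w U. edge_weight w e * (f (SOME u. u \<in> e) - f (SOME v. v \<in> e \<and> v \<noteq> (SOME u. u \<in> e)))\<^sup>2)
     / (\<Sum>v\<in>U. wdeg U w v * (f v)\<^sup>2)"

end

theory Submission
  imports Defs
begin

lemma meas_Ioc: "Sigma_Algebra.measure lborel {b<..a::real} = max 0 (a - b)"
  by (cases "b \<le> a") auto
lemma int_Ioc: "integrable lborel (indicator {b<..a::real} :: real \<Rightarrow> real)"
proof (cases "b \<le> a")
  case True then show ?thesis by (intro integrable_real_indicator) auto
next
  case False then have "{b<..a} = {}" by auto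
  then show ?thesis by simp
qed
lemma integral_compare:
  fixes c lo hi :: "'i \<Rightarrow> real" and d lo' hi' :: "'j \<Rightarrow> real"
  assumes "finite I" "finite J"
    and "\<And>s. (\<Sum>i\<in>I. c i * indicator {lo i<..hi i} s) \<le> (\<Sum>j\<in>J. d j * indicator {lo' j<..hi' j} s)"
  shows "(\<Sum>i\<in>I. c i * max 0 (hi i - lo i)) \<le> (\<Sum>j\<in>J. d j * max 0 (hi' j - lo' j))"
proof -
  have "(\<Sum>i\<in>I. c i * max 0 (hi i - lo i)) = (LINT s|lborel. (\<Sum>i\<in>I. c i * indicator {lo i<..hi i} s))"
    by (subst Bochner_Integration.integral_sum) (auto simp: int_Ioc meas_Ioc)
  also have "\<dots> \<le> (LINT s|lborel. (\<Sum>j\<in>J. d j * indicator {lo' j<..hi' j} s))"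
    by (rule Bochner_Integration.integral_mono) (auto simp: int_Ioc assms(3))
  also have "\<dots> = (\<Sum>j\<in>J. d j * max 0 (hi' j - lo' j))"
    by (subst Bochner_Integration.integral_sum) (auto simp: int_Ioc meas_Ioc)
  finally show ?thesis .
qed

lemma edge_weight_pair:
  assumes "\<forall>u v. w u v = w v u"
  shows "edge_weight w {u, v} = w u v"
  unfolding edge_weight_def
proof (rule the_equality)
  show "\<exists>x y. {u, v} = {x, y} \<and> w u v = w x y" by blast
next
  fix c assume "\<exists>x y. {u, v} = {x, y} \<and> c = w x y"
  then obtain x y where "{u, v} = {x, y}" "c = w x y" by blast
  then show "c = w u v" using assms by (auto simp: doubleton_eq_iff)
qed

lemma some_pair:
  fixes f :: "'a \<Rightarrow> real"
  assumes "u \<noteq> v"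
  shows "(f (SOME x. x \<in> {u, v}) - f (SOME y. y \<in> {u, v} \<and> y \<noteq> (SOME x. x \<in> {u, v})))\<^sup>2 = (f u - f v)\<^sup>2"
proof -
  define a where "a = (SOME x. x \<in> {u, v})"
  have a: "a \<in> {u, v}" unfolding a_def by (rule someI) blast
  define b where "b = (SOME y. y \<in> {u, v} \<and> y \<noteq> a)"
  have b: "b \<in> {u, v} \<and> b \<noteq> a" unfolding b_def by (rule someI_ex) (use a assms in auto)
  have "(f a - f b)\<^sup>2 = (f u - f v)\<^sup>2"
  proof (cases "a = u")
    case True then have "b = v" using b by auto
    then show ?thesis using True by simp
  next
    case False then have "a = v" "b = u" using a b by auto
    then show ?thesis by (simp add: power2_eq_square algebra_simps)
  qed
  then show ?thesis unfolding a_def b_def .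
qed

lemma edge_sum:
  assumes "finite S" "\<forall>u v. w u v = w v u" "\<forall>u v. w u v \<ge> 0"
  shows "(\<Sum>e\<in>edges_in w S. edge_weight w e * (f (SOME u. u \<in> e) - f (SOME v. v \<in> e \<and> v \<noteq> (SOME u. u \<in> e)))\<^sup>2)
     = (\<Sum>u\<in>S. \<Sum>v\<in>S. w u v * (f u - f v)\<^sup>2) / 2"
proof -
  define h where "h e = edge_weight w e * (f (SOME u. u \<in> e) - f (SOME v. v \<in> e \<and> v \<noteq> (SOME u. u \<in> e)))\<^sup>2" for e
  define F where "F p = w (fst p) (snd p) * (f (fst p) - f (snd p))\<^sup>2" for p
  define P where "P = {p \<in> S \<times> S. fst p \<noteq> snd p \<and> w (fst p) (snd p) > 0}"
  define g where "g p = {fst p, snd p}" for p :: "'a \<times> 'a"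
  have finP: "finite P" unfolding P_def using assms(1) by auto
  have "(\<Sum>u\<in>S. \<Sum>v\<in>S. w u v * (f u - f v)\<^sup>2) = (\<Sum>p\<in>S \<times> S. F p)"
    by (simp add: sum.cartesian_product F_def case_prod_beta)
  also have "\<dots> = (\<Sum>p\<in>P. F p)"
  proof (rule sum.mono_neutral_right)
    show "\<forall>i\<in>S \<times> S - P. F i = 0"
    proof
      fix p assume "p \<in> S \<times> S - P"
      then have "fst p = snd p \<or> w (fst p) (snd p) = 0" using assms(3) unfolding P_def
        by (auto simp: not_less intro: antisym)
      then show "F p = 0" unfolding F_def by auto
    qed
  qed (use assms(1) P_def in auto)
  also have "\<dots> = (\<Sum>e\<in>g ` P. \<Sum>p\<in>{x \<in> P. g x = e}. F p)"
    by (rule sum.image_gen[OF finP])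
  also have "\<dots> = (\<Sum>e\<in>g ` P. 2 * h e)"
  proof (rule sum.cong[OF refl])
    fix e assume "e \<in> g ` P"
    then obtain u v where uv: "(u, v) \<in> P" "e = {u, v}" unfolding g_def by auto
    have uvne: "u \<noteq> v" using uv unfolding P_def by auto
    have vu: "(v, u) \<in> P" using uv assms(2) unfolding P_def by auto
    have fib: "{x \<in> P. g x = e} = {(u, v), (v, u)}"
      using uv vu unfolding g_def P_def by (auto simp: doubleton_eq_iff)
    have "(\<Sum>p\<in>{x \<in> P. g x = e}. F p) = F (u, v) + F (v, u)"
      using uvne by (simp add: fib)
    also have "\<dots> = 2 * (w u v * (f u - f v)\<^sup>2)"
      using assms(2) by (simp add: F_def power2_eq_square algebra_simps)
    also have "\<dots> = 2 * h e"
      unfolding h_def uv(2) edge_weight_pair[OF assms(2)] some_pair[OF uvne] ..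
    finally show "(\<Sum>p\<in>{x \<in> P. g x = e}. F p) = 2 * h e" .
  qed
  also have "g ` P = edges_in w S"
    
  proof
    show "g ` P \<subseteq> edges_in w S"
    proof
      fix e assume "e \<in> g ` P"
      then obtain u v where "(u, v) \<in> P" "e = {u, v}" unfolding g_def by auto
      then have "u \<in> S \<and> v \<in> S \<and> u \<noteq> v \<and> w u v > 0 \<and> e = {u, v}" unfolding P_def by auto
      then show "e \<in> edges_in w S" unfolding edges_in_def by blast
    qed
    show "edges_in w S \<subseteq> g ` P"
    proof
      fix e assume "e \<in> edges_in w S"
      then obtain u v where "e = {u, v}" "u \<in> S" "v \<in> S" "u \<noteq> v" "w u v > 0"
        unfolding edges_in_def by blast
      then have "(u, v) \<in> P" "e = g (u, v)" unfolding P_def g_def by auto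
      then show "e \<in> g ` P" by blast
    qed
  qed
  finally show ?thesis by (simp add: h_def sum_distrib_left[symmetric])
qed

lemma amgm:
  fixes a b l :: real
  assumes "l > 0"
  shows "2 * (\<bar>a\<bar> * \<bar>b\<bar>) \<le> l * a\<^sup>2 + b\<^sup>2 / l"
proof -
  have "0 \<le> (l * \<bar>a\<bar> - \<bar>b\<bar>)\<^sup>2 / l" using assms by simp
  also have "(l * \<bar>a\<bar> - \<bar>b\<bar>)\<^sup>2 / l = l * a\<^sup>2 + b\<^sup>2 / l - 2 * (\<bar>a\<bar> * \<bar>b\<bar>)"
    using assms by (simp add: field_simps power2_eq_square)
  finally show ?thesis by simp
qed

lemma maxabs: "max 0 (a - b) + max 0 (b - a) = \<bar>a - b\<bar>" for a b :: real
  by auto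

lemma sym_swap:
  fixes w :: "'a \<Rightarrow> 'a \<Rightarrow> real"
  assumes "\<forall>u v. w u v = w v u"
  shows "(\<Sum>u\<in>S. \<Sum>v\<in>S. w u v * g u v) = (\<Sum>u\<in>S. \<Sum>v\<in>S. w u v * g v u)"
  using assms by (subst sum.swap) simp

theorem mainTheorem10:
  fixes V U :: "'a set" and w :: "'a \<Rightarrow> 'a \<Rightarrow> real" and f :: "'a \<Rightarrow> real"
  assumes "wgraph V w"
    and "\<forall>v\<in>V. wdeg V w v \<ge> 1"
    and "U \<subseteq> V"
    and "\<forall>v. f v \<ge> 0"
    and "\<forall>v. v \<notin> U \<longrightarrow> f v = 0"
    and "(\<Sum>v\<in>U. wdeg U w v * (f v)\<^sup>2) > 0"
    and "\<forall>t>0. cut_weight w (superlevel V f t) (V - U)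
                \<le> cut_weight w (superlevel V f t) (U - superlevel V f t)"
  shows "sqrt (8 * rayleigh U w f) \<ge> rayleigh V w f"
proof -
  have finV: "finite V" and sym: "\<forall>u v. w u v = w v u" and nn: "\<forall>u v. w u v \<ge> 0"
    using assms(1) unfolding wgraph_def by auto
  have finU: "finite U" using finV assms(3) finite_subset by blast
  have f0: "\<And>v. v \<notin> U \<Longrightarrow> f v = 0" using assms(5) by blast
  have fnn: "\<And>v. f v \<ge> 0" using assms(4) by blast
  define NH where "NH = (\<Sum>u\<in>U. \<Sum>v\<in>U. w u v * (f u - f v)\<^sup>2)"
  define NG where "NG = (\<Sum>u\<in>V. \<Sum>v\<in>V. w u v * (f u - f v)\<^sup>2)"
  define DH where "DH = (\<Sum>v\<in>U. wdeg U w v * (f v)\<^sup>2)"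
  define DG where "DG = (\<Sum>v\<in>V. wdeg V w v * (f v)\<^sup>2)"
  define B where "B = (\<Sum>u\<in>U. \<Sum>x\<in>V - U. w u x * (f u)\<^sup>2)"
  define A where "A = (\<Sum>u\<in>U. \<Sum>v\<in>U. w u v * max 0 ((f u)\<^sup>2 - (f v)\<^sup>2))"
  have DHpos: "DH > 0" using assms(6) DH_def by simp
  have RH: "rayleigh U w f = (NH / 2) / DH"
    unfolding rayleigh_def edge_sum[OF finU sym nn] NH_def DH_def ..
  have RG: "rayleigh V w f = (NG / 2) / DG"
    unfolding rayleigh_def edge_sum[OF finV sym nn] NG_def DG_def ..
  have NHnn: "NH \<ge> 0" unfolding NH_def using nn by (intro sum_nonneg) auto
  have Bnn: "B \<ge> 0" unfolding B_def using nn by (intro sum_nonneg) auto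
  have NG: "NG = NH + 2 * B"
  proof -
    have split: "\<And>g. (\<Sum>x\<in>V. g x) = (\<Sum>x\<in>U. g x) + (\<Sum>x\<in>V - U. g x)"
      using finV assms(3) by (metis add.commute sum.subset_diff)
    have "NG = (\<Sum>u\<in>U. \<Sum>v\<in>V. w u v * (f u - f v)\<^sup>2) + (\<Sum>u\<in>V - U. \<Sum>v\<in>V. w u v * (f u - f v)\<^sup>2)"
      unfolding NG_def by (rule split)
    also have "(\<Sum>u\<in>U. \<Sum>v\<in>V. w u v * (f u - f v)\<^sup>2) = NH + B"
    proof -
      have "(\<Sum>u\<in>U. \<Sum>v\<in>V. w u v * (f u - f v)\<^sup>2)
          = (\<Sum>u\<in>U. (\<Sum>v\<in>U. w u v * (f u - f v)\<^sup>2) + (\<Sum>x\<in>V - U. w u x * (f u)\<^sup>2))"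
        by (intro sum.cong refl, subst split) (simp add: f0)
      then show ?thesis unfolding NH_def B_def by (simp add: sum.distrib)
    qed
    also have "(\<Sum>u\<in>V - U. \<Sum>v\<in>V. w u v * (f u - f v)\<^sup>2) = B"
    proof -
      have "(\<Sum>u\<in>V - U. \<Sum>v\<in>V. w u v * (f u - f v)\<^sup>2) = (\<Sum>u\<in>V - U. \<Sum>v\<in>U. w v u * (f v)\<^sup>2)"
      proof (rule sum.cong[OF refl])
        fix u assume u: "u \<in> V - U"
        then have fu: "f u = 0" using f0 by auto
        have "(\<Sum>v\<in>V. w u v * (f u - f v)\<^sup>2) = (\<Sum>v\<in>U. w u v * (f u - f v)\<^sup>2) + (\<Sum>v\<in>V - U. w u v * (f u - f v)\<^sup>2)"
          by (rule split)
        also have "(\<Sum>v\<in>V - U. w u v * (f u - f v)\<^sup>2) = 0" using fu f0 by (intro sum.neutral) auto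
        also have "(\<Sum>v\<in>U. w u v * (f u - f v)\<^sup>2) = (\<Sum>v\<in>U. w v u * (f v)\<^sup>2)"
          using fu sym by (intro sum.cong refl) (simp add: power2_eq_square)
        finally show "(\<Sum>v\<in>V. w u v * (f u - f v)\<^sup>2) = (\<Sum>v\<in>U. w v u * (f v)\<^sup>2)" by simp
      qed
      also have "\<dots> = B" unfolding B_def by (rule sum.swap)
      finally show ?thesis .
    qed
    finally show ?thesis by simp
  qed
  have DG: "DG \<ge> DH"
  proof -
    have "DG = (\<Sum>v\<in>U. wdeg V w v * (f v)\<^sup>2)"
      unfolding DG_def using finV assms(3) by (intro sum.mono_neutral_right) (auto simp: f0)
    also have "\<dots> \<ge> DH" unfolding DH_def
    proof (intro sum_mono mult_right_mono)
      fix v assume "v \<in> U"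
      show "wdeg U w v \<le> wdeg V w v" unfolding wdeg_def
        using finV assms(3) nn by (intro sum_mono2) auto
    qed simp
    finally show ?thesis .
  qed
  have BA: "B \<le> A"
  proof -
    have "(\<Sum>p\<in>U \<times> (V - U). w (fst p) (snd p) * max 0 ((f (fst p))\<^sup>2 - 0))
        \<le> (\<Sum>p\<in>U \<times> U. w (fst p) (snd p) * max 0 ((f (fst p))\<^sup>2 - (f (snd p))\<^sup>2))"
    proof (rule integral_compare)
      fix s :: real
      show "(\<Sum>p\<in>U \<times> (V - U). w (fst p) (snd p) * indicator {0<..(f (fst p))\<^sup>2} s)
         \<le> (\<Sum>p\<in>U \<times> U. w (fst p) (snd p) * indicator {(f (snd p))\<^sup>2<..(f (fst p))\<^sup>2} s)"
      proof (cases "s > 0")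
        case False
        then have "(\<Sum>p\<in>U \<times> (V - U). w (fst p) (snd p) * indicator {0<..(f (fst p))\<^sup>2} s) = 0"
          by (intro sum.neutral) (auto simp: indicator_def)
        moreover have "0 \<le> (\<Sum>p\<in>U \<times> U. w (fst p) (snd p) * indicator {(f (snd p))\<^sup>2<..(f (fst p))\<^sup>2} s)"
          using nn by (intro sum_nonneg) auto
        ultimately show ?thesis by simp
      next
        case True
        define t where "t = sqrt s"
        have tpos: "t > 0" using True t_def by simp
        define S where "S = superlevel V f t"
        have SU: "S \<subseteq> U" unfolding S_def superlevel_def using tpos f0 by force
        have key: "\<And>u. u \<in> U \<Longrightarrow> (s \<le> (f u)\<^sup>2) = (u \<in> S)"
        proof -
          fix u assume "u \<in> U"
          then have "u \<in> V" using assms(3) by auto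
          have "(s \<le> (f u)\<^sup>2) = (sqrt s \<le> sqrt ((f u)\<^sup>2))" by (rule real_sqrt_le_iff[symmetric])
          also have "\<dots> = (t \<le> f u)" using fnn[of u] t_def by simp
          finally show "(s \<le> (f u)\<^sup>2) = (u \<in> S)" unfolding S_def superlevel_def using \<open>u \<in> V\<close> by auto
        qed
        have "(\<Sum>p\<in>U \<times> (V - U). w (fst p) (snd p) * indicator {0<..(f (fst p))\<^sup>2} s)
            = (\<Sum>u\<in>U. \<Sum>x\<in>V - U. w u x * indicator {0<..(f u)\<^sup>2} s)"
          by (simp add: sum.cartesian_product case_prod_beta)
        also have "\<dots> = (\<Sum>u\<in>U. if u \<in> S then (\<Sum>x\<in>V - U. w u x) else 0)"
          using True key by (intro sum.cong refl) (auto simp: indicator_def)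
        also have "\<dots> = (\<Sum>u\<in>U \<inter> S. \<Sum>x\<in>V - U. w u x)"
          using finU by (simp add: sum.inter_restrict)
        also have "\<dots> = cut_weight w S (V - U)"
          unfolding cut_weight_def using SU by (simp add: Int_absorb1)
        also have "\<dots> \<le> cut_weight w S (U - S)" using assms(7) tpos unfolding S_def by blast
        also have "cut_weight w S (U - S) = (\<Sum>u\<in>U \<inter> S. \<Sum>v\<in>U \<inter> - S. w u v)"
          unfolding cut_weight_def using SU by (simp add: Int_absorb1 Diff_eq)
        also have "\<dots> = (\<Sum>u\<in>U. if u \<in> S then (\<Sum>v\<in>U. if v \<notin> S then w u v else 0) else 0)"
          using finU by (simp add: sum.inter_restrict Compl_iff)
        also have "\<dots> = (\<Sum>u\<in>U. \<Sum>v\<in>U. w u v * indicator {(f v)\<^sup>2<..(f u)\<^sup>2} s)"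
        proof (intro sum.cong refl)
          fix u assume u: "u \<in> U"
          show "(if u \<in> S then (\<Sum>v\<in>U. if v \<notin> S then w u v else 0) else 0)
              = (\<Sum>v\<in>U. w u v * indicator {(f v)\<^sup>2<..(f u)\<^sup>2} s)"
          proof (cases "u \<in> S")
            case True
            have "(\<Sum>v\<in>U. if v \<notin> S then w u v else 0) = (\<Sum>v\<in>U. w u v * indicator {(f v)\<^sup>2<..(f u)\<^sup>2} s)"
            proof (rule sum.cong[OF refl])
              fix v assume v: "v \<in> U"
              have "s \<le> (f u)\<^sup>2" using key[OF u] True by simp
              moreover have "(s \<le> (f v)\<^sup>2) = (v \<in> S)" using key[OF v] .
              ultimately show "(if v \<notin> S then w u v else 0) = w u v * indicator {(f v)\<^sup>2<..(f u)\<^sup>2} s"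
                by (auto simp: indicator_def not_le)
            qed
            then show ?thesis using True by simp
          next
            case False
            then have "\<And>v. indicator {(f v)\<^sup>2<..(f u)\<^sup>2} s = (0::real)"
              using key u by (auto simp: indicator_def)
            then show ?thesis using False by simp
          qed
        qed
        also have "\<dots> = (\<Sum>p\<in>U \<times> U. w (fst p) (snd p) * indicator {(f (snd p))\<^sup>2<..(f (fst p))\<^sup>2} s)"
          by (simp add: sum.cartesian_product case_prod_beta)
        finally show ?thesis .
      qed
    qed (use finU finV in auto)
    then show ?thesis unfolding A_def B_def
      by (simp add: sum.cartesian_product case_prod_beta max_def)
  qed
  define Y where "Y = (\<Sum>u\<in>U. \<Sum>v\<in>U. w u v * (f u + f v)\<^sup>2)"
  have A2: "2 * A = (\<Sum>u\<in>U. \<Sum>v\<in>U. w u v * \<bar>(f u)\<^sup>2 - (f v)\<^sup>2\<bar>)"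
  proof -
    have "A = (\<Sum>u\<in>U. \<Sum>v\<in>U. w u v * max 0 ((f v)\<^sup>2 - (f u)\<^sup>2))"
      unfolding A_def by (rule sym_swap[OF sym])
    then have "2 * A = (\<Sum>u\<in>U. \<Sum>v\<in>U. w u v * max 0 ((f u)\<^sup>2 - (f v)\<^sup>2))
                    + (\<Sum>u\<in>U. \<Sum>v\<in>U. w u v * max 0 ((f v)\<^sup>2 - (f u)\<^sup>2))"
      unfolding A_def by simp
    also have "\<dots> = (\<Sum>u\<in>U. \<Sum>v\<in>U. w u v * \<bar>(f u)\<^sup>2 - (f v)\<^sup>2\<bar>)"
      by (simp add: sum.distrib[symmetric] distrib_left[symmetric] maxabs)
    finally show ?thesis .
  qed
  have Ylam: "\<And>l. l > 0 \<Longrightarrow> 4 * A \<le> l * NH + Y / l"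
  proof -
    fix l :: real assume l: "l > 0"
    have "4 * A = (\<Sum>u\<in>U. \<Sum>v\<in>U. w u v * (2 * (\<bar>f u - f v\<bar> * \<bar>f u + f v\<bar>)))"
    proof -
      have "\<And>u v. \<bar>(f u)\<^sup>2 - (f v)\<^sup>2\<bar> = \<bar>f u - f v\<bar> * \<bar>f u + f v\<bar>"
        by (simp add: abs_mult[symmetric] power2_eq_square algebra_simps)
      then have "4 * A = 2 * (\<Sum>u\<in>U. \<Sum>v\<in>U. w u v * (\<bar>f u - f v\<bar> * \<bar>f u + f v\<bar>))"
        using A2 by simp
      also have "\<dots> = (\<Sum>u\<in>U. \<Sum>v\<in>U. w u v * (2 * (\<bar>f u - f v\<bar> * \<bar>f u + f v\<bar>)))"
        by (simp add: sum_distrib_left mult.left_commute)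
      finally show ?thesis .
    qed
    also have "\<dots> \<le> (\<Sum>u\<in>U. \<Sum>v\<in>U. w u v * (l * (f u - f v)\<^sup>2 + (f u + f v)\<^sup>2 / l))"
      using nn amgm[OF l] by (intro sum_mono mult_left_mono) auto
    also have "\<dots> = l * NH + Y / l"
      unfolding NH_def Y_def by (simp add: sum_distrib_left sum.distrib sum_divide_distrib algebra_simps)
    finally show "4 * A \<le> l * NH + Y / l" .
  qed
  have YD: "Y \<le> 4 * DH"
  proof -
    have "Y \<le> (\<Sum>u\<in>U. \<Sum>v\<in>U. w u v * (2 * (f u)\<^sup>2 + 2 * (f v)\<^sup>2))"
      unfolding Y_def
    proof (intro sum_mono mult_left_mono)
      fix u v show "(f u + f v)\<^sup>2 \<le> 2 * (f u)\<^sup>2 + 2 * (f v)\<^sup>2"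
        using sum_squares_ge_zero[of "f u - f v" 0] by (simp add: power2_eq_square algebra_simps)
    qed (use nn in auto)
    also have "\<dots> = 2 * (\<Sum>u\<in>U. \<Sum>v\<in>U. w u v * (f u)\<^sup>2) + 2 * (\<Sum>u\<in>U. \<Sum>v\<in>U. w u v * (f v)\<^sup>2)"
      by (simp add: sum_distrib_left sum.distrib algebra_simps)
    also have "(\<Sum>u\<in>U. \<Sum>v\<in>U. w u v * (f v)\<^sup>2) = (\<Sum>u\<in>U. \<Sum>v\<in>U. w u v * (f u)\<^sup>2)"
      by (rule sym_swap[OF sym, symmetric])
    also have "(\<Sum>u\<in>U. \<Sum>v\<in>U. w u v * (f u)\<^sup>2) = DH"
      unfolding DH_def wdeg_def using sym by (simp add: sum_distrib_right)
    finally show ?thesis by simp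
  qed
  have NHD: "NH \<le> 4 * DH"
  proof -
    have "NH \<le> (\<Sum>u\<in>U. \<Sum>v\<in>U. w u v * (2 * (f u)\<^sup>2 + 2 * (f v)\<^sup>2))"
      unfolding NH_def
    proof (intro sum_mono mult_left_mono)
      fix u v show "(f u - f v)\<^sup>2 \<le> 2 * (f u)\<^sup>2 + 2 * (f v)\<^sup>2"
        using sum_squares_ge_zero[of "f u + f v" 0] by (simp add: power2_eq_square algebra_simps)
    qed (use nn in auto)
    also have "\<dots> = 2 * (\<Sum>u\<in>U. \<Sum>v\<in>U. w u v * (f u)\<^sup>2) + 2 * (\<Sum>u\<in>U. \<Sum>v\<in>U. w u v * (f v)\<^sup>2)"
      by (simp add: sum_distrib_left sum.distrib algebra_simps)
    also have "(\<Sum>u\<in>U. \<Sum>v\<in>U. w u v * (f v)\<^sup>2) = (\<Sum>u\<in>U. \<Sum>v\<in>U. w u v * (f u)\<^sup>2)"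
      by (rule sym_swap[OF sym, symmetric])
    also have "(\<Sum>u\<in>U. \<Sum>v\<in>U. w u v * (f u)\<^sup>2) = DH"
      unfolding DH_def wdeg_def using sym by (simp add: sum_distrib_right)
    finally show ?thesis by simp
  qed
  have AB: "A \<le> sqrt (NH * DH)"
  proof (cases "NH = 0")
    case True
    show ?thesis
    proof (rule ccontr)
      assume "\<not> A \<le> sqrt (NH * DH)"
      then have Apos: "A > 0" using True by simp
      have "4 * A \<le> Y / (8 * DH / A)"
        using Ylam[of "8 * DH / A"] True Apos DHpos by simp
      also have "\<dots> = Y * A / (8 * DH)" using Apos by simp
      also have "\<dots> \<le> 4 * DH * A / (8 * DH)"
        using YD Apos DHpos by (intro divide_right_mono mult_right_mono) auto
      also have "\<dots> = A / 2" using DHpos by simp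
      finally show False using Apos by simp
    qed
  next
    case False
    then have NHpos: "NH > 0" using NHnn by simp
    define q where "q = sqrt (DH / NH)"
    have qpos: "q > 0" using NHpos DHpos q_def by simp
    have qq: "q * q = DH / NH" using NHpos DHpos q_def by simp
    have "4 * A \<le> (2 * q) * NH + Y / (2 * q)" using Ylam[of "2 * q"] qpos by simp
    also have "\<dots> \<le> (2 * q) * NH + 4 * DH / (2 * q)"
    proof -
      have "Y / (2 * q) \<le> 4 * DH / (2 * q)" using YD qpos by (intro divide_right_mono) auto
      then show ?thesis by linarith
    qed
    also have "4 * DH / (2 * q) = 2 * q * NH"
      using qq qpos NHpos by (simp add: field_simps)
    also have "2 * q * NH + 2 * q * NH = 4 * (q * NH)" by simp
    also have "q * NH = sqrt (NH * DH)"
    proof -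
      have "sqrt (NH * NH) = NH" using NHpos by simp
      then have "q * NH = sqrt (DH / NH) * sqrt (NH * NH)" using q_def by simp
      also have "\<dots> = sqrt (DH / NH * (NH * NH))" by (rule real_sqrt_mult[symmetric])
      also have "DH / NH * (NH * NH) = NH * DH" using NHpos by (simp add: field_simps)
      finally show ?thesis .
    qed
    finally show ?thesis by simp
  qed
  define r where "r = sqrt (NH / DH)"
  have r0: "r \<ge> 0" and r2: "r \<le> 2" using NHnn DHpos NHD r_def
    by (auto simp: real_sqrt_le_iff[of _ 4, simplified] pos_divide_le_eq)
  have rr: "r * r = NH / DH" using NHnn DHpos r_def by simp
  have sq: "sqrt (NH * DH) = r * DH"
  proof -
    have "sqrt (NH * DH) = sqrt (NH / DH * (DH * DH))" using DHpos by (simp add: field_simps)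
    also have "\<dots> = sqrt (NH / DH) * sqrt (DH * DH)" by (rule real_sqrt_mult)
    also have "sqrt (DH * DH) = DH" using DHpos by simp
    finally show ?thesis unfolding r_def .
  qed
  have DGpos: "DG > 0" using DG DHpos by linarith
  have NG2: "NG / 2 = NH / 2 + B" using NG by simp
  have "rayleigh V w f = (NH / 2 + B) / DG" using RG NG2 by simp
  also have "\<dots> \<le> (NH / 2 + B) / DH"
    by (rule divide_left_mono) (use DG DHpos DGpos NHnn Bnn in auto)
  also have "\<dots> \<le> (NH / 2 + r * DH) / DH"
    by (rule divide_right_mono) (use BA AB sq DHpos in auto)
  also have "(NH / 2 + r * DH) / DH = NH / DH / 2 + r"
    using DHpos by (simp add: add_divide_distrib)
  also have "\<dots> = r * r / 2 + r" using rr by simp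
  also have "\<dots> \<le> 2 * r"
  proof -
    have "r * r \<le> 2 * r" using r0 r2 by (intro mult_right_mono) auto
    then show ?thesis by linarith
  qed
  also have "2 * r = sqrt (8 * rayleigh U w f)"
  proof -
    have "8 * rayleigh U w f = 4 * (NH / DH)" using RH by simp
    then have "sqrt (8 * rayleigh U w f) = sqrt 4 * sqrt (NH / DH)" by (simp only: real_sqrt_mult)
    then show ?thesis using r_def by simp
  qed
  finally show ?thesis .
qed

end
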